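(* Let $P$ and $C$ be causal stable systems on $\mathcal{L}_{2e+}^n$ such that the feedback system $P\#C$ is well-posed. If $\theta_e(P)+\theta_e(C)<\pi$, then $P\#C|_{e_2=0}$ is stable.
   Context: $\mathcal{L}_2^n$: measurable $u:\mathbb{R}\to\mathbb{R}^n$ with $\|u\|_2^2=\int|u(t)|^2dt<\infty$, inner product $\langle u,v\rangle=\int u(t)^Tv(t)\,dt$; $\mathcal{L}_{2+}=\{u\in\mathcal{L}_2:u(t)=0\ \text{for}\ t<0\}$. For $T\ge0$, $(\Gamma_Tu)(t)=u(t)$ for $t\le T$, $0$ for $t>T$, $u_T=\Gamma_Tu$; $\mathcal{L}_{2e+}=\{u:u_T\in\mathcal{L}_{2+}\ \forall T\ge0\}$. A system is an operator $P:\mathcal{L}_{2e+}\to\mathcal{L}_{2e+}$ with $P0=0$, $P\ne0$; causal if $\Gamma_TP=\Gamma_TP\Gamma_T$ for all $T\ge0$; a causal system is stable if $Pu\in\mathcal{L}_{2+}$ for all $u\in\mathcal{L}_{2+}$ and $\sup_{0\ne u\in\mathcal{L}_{2+}}\|Pu\|_2/\|u\|_2<\infty$. The $\mathcal{L}_{2e}$ singular angle $\theta_e(P)\in[0,\pi]$ is given by $\cos\theta_e(P)=\inf\{\langle u_T,(Pu)_T\rangle/(\|u_T\|_2\|(Pu)_T\|_2): u\in\mathcal{L}_{2e+},\ T>0,\ \|u_T\|_2\ne0,\ \|(Pu)_T\|_2\ne0\}$. The feedback system $P\#C$: $u_1=e_1-y_2$, $u_2=e_2+y_1$, $y_1=Pu_1$,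 $y_2=Cu_2$; well-posed if $(u_1,u_2)\mapsto(u_1+Cu_2,\ u_2-Pu_1)$ has a causal inverse on $\mathcal{L}_{2e+}\times\mathcal{L}_{2e+}$. $P\#C|_{e_2=0}$ is the loop with $e_2=0$; it is stable if there is $c>0$ with $\|\Gamma_T(u_1,u_2)\|_2\le c\|\Gamma_Te\|_2$ for all $T\ge0$ and all $e=(e_1,0)$, $e_1\in\mathcal{L}_{2e+}$. *)

theory Defs
  imports "HOL-Analysis.Analysis"
begin

type_synonym 'n signal = "real \<Rightarrow> real^'n"

definition L2 :: "'n::finite signal set" where
  "L2 = {u. u \<in> borel_measurable lebesgue \<and> integrable lebesgue (\<lambda>t. (norm (u t))\<^sup>2)}"

definition L2_inner :: "'n::finite signal \<Rightarrow> 'n signal \<Rightarrow> real" where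
  "L2_inner u v = (LINT t|lebesgue. u t \<bullet> v t)"

definition L2_norm :: "'n::finite signal \<Rightarrow> real" where
  "L2_norm u = sqrt (LINT t|lebesgue. (norm (u t))\<^sup>2)"

definition L2p :: "'n::finite signal set" where
  "L2p = {u. u \<in> L2 \<and> (\<forall>t<0. u t = 0)}"

definition trunc :: "real \<Rightarrow> 'n::finite signal \<Rightarrow> 'n signal" where
  "trunc T u = (\<lambda>t. if t \<le> T then u t else 0)"

definition L2ep :: "'n::finite signal set" where
  "L2ep = {u. \<forall>T\<ge>0. trunc T u \<in> L2p}"

definition is_system :: "('n::finite signal \<Rightarrow> 'n signal) \<Rightarrow> bool" where
  "is_system P \<longleftrightarrow> (\<forall>u\<in>L2ep. P u \<in> L2ep) \<and> P (\<lambda>t. 0) = (\<lambda>t. 0)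
     \<and> (\<exists>u\<in>L2ep. \<exists>T\<ge>0. L2_norm (trunc T (P u)) \<noteq> 0)"

definition causal :: "('n::finite signal \<Rightarrow> 'n signal) \<Rightarrow> bool" where
  "causal P \<longleftrightarrow> (\<forall>T\<ge>0. \<forall>u\<in>L2ep. trunc T (P u) = trunc T (P (trunc T u)))"

definition stable :: "('n::finite signal \<Rightarrow> 'n signal) \<Rightarrow> bool" where
  "stable P \<longleftrightarrow> causal P \<and> (\<forall>u\<in>L2p. P u \<in> L2p)
     \<and> bdd_above {L2_norm (P u) / L2_norm u | u. u \<in> L2p \<and> L2_norm u \<noteq> 0}"

definition singular_angle_e :: "('n::finite signal \<Rightarrow> 'n signal) \<Rightarrow> real" where
  "singular_angle_e P = arccos (Inf
     {L2_inner (trunc T u) (trunc T (P u)) / (L2_norm (trunc T u) * L2_norm (trunc T (P u))) | u T.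
        u \<in> L2ep \<and> T > 0 \<and> L2_norm (trunc T u) \<noteq> 0 \<and> L2_norm (trunc T (P u)) \<noteq> 0})"

definition trunc2 :: "real \<Rightarrow> 'n::finite signal \<times> 'n signal \<Rightarrow> 'n signal \<times> 'n signal" where
  "trunc2 T x = (trunc T (fst x), trunc T (snd x))"

definition L2_norm2 :: "'n::finite signal \<times> 'n signal \<Rightarrow> real" where
  "L2_norm2 x = sqrt ((L2_norm (fst x))\<^sup>2 + (L2_norm (snd x))\<^sup>2)"

definition well_posed :: "('n::finite signal \<Rightarrow> 'n signal) \<Rightarrow> ('n signal \<Rightarrow> 'n signal) \<Rightarrow> bool" where
  "well_posed P C \<longleftrightarrow>
    (let F = (\<lambda>(u1, u2). ((\<lambda>t. u1 t + C u2 t), (\<lambda>t. u2 t - P u1 t))) in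
     \<exists>G. (\<forall>e \<in> L2ep \<times> L2ep. G e \<in> L2ep \<times> L2ep \<and> F (G e) = e)
       \<and> (\<forall>u \<in> L2ep \<times> L2ep. G (F u) = u)
       \<and> (\<forall>T\<ge>0. \<forall>e \<in> L2ep \<times> L2ep. trunc2 T (G e) = trunc2 T (G (trunc2 T e))))"

definition stable_e2_zero :: "('n::finite signal \<Rightarrow> 'n signal) \<Rightarrow> ('n signal \<Rightarrow> 'n signal) \<Rightarrow> bool" where
  "stable_e2_zero P C \<longleftrightarrow>
    (\<exists>c>0. \<forall>T\<ge>0. \<forall>e1 u1 u2. e1 \<in> L2ep \<and> u1 \<in> L2ep \<and> u2 \<in> L2ep
        \<and> e1 = (\<lambda>t. u1 t + C u2 t) \<and> (\<lambda>t. 0) = (\<lambda>t. u2 t - P u1 t) \<longrightarrow>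
        L2_norm2 (trunc2 T (u1, u2)) \<le> c * L2_norm2 (trunc2 T (e1, \<lambda>t. 0)))"

end

theory Submission
  imports Defs
begin


lemma trunc_ind: "trunc T u = (\<lambda>t. indicator {..T} t *\<^sub>R u t)"
  by (auto simp: trunc_def indicator_def fun_eq_iff)

lemma meas_ind: "(\<lambda>t. indicator A t *\<^sub>R (u t::real^'n)) \<in> borel_measurable lebesgue"
  if "A \<in> sets lebesgue" "u \<in> borel_measurable lebesgue"
  using that by (intro borel_measurable_scaleR borel_measurable_indicator) auto

lemma L2_sq_int: "u \<in> L2 \<Longrightarrow> integrable lebesgue (\<lambda>t. (norm (u t))\<^sup>2)"
  by (simp add: L2_def)
lemma L2_meas: "u \<in> L2 \<Longrightarrow> u \<in> borel_measurable lebesgue"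
  by (simp add: L2_def)

lemma L2_inner_int:
  fixes u v :: "'n::finite signal"
  assumes "u \<in> L2" "v \<in> L2"
  shows "integrable lebesgue (\<lambda>t. u t \<bullet> v t)"
proof (rule Bochner_Integration.integrable_bound)
  show "integrable lebesgue (\<lambda>t. (norm (u t))\<^sup>2 + (norm (v t))\<^sup>2)"
    using assms by (simp add: L2_def)
  show "(\<lambda>t. u t \<bullet> v t) \<in> borel_measurable lebesgue"
    using assms by (intro borel_measurable_inner) (auto simp: L2_def)
  show "AE t in lebesgue. norm (u t \<bullet> v t) \<le> norm ((norm (u t))\<^sup>2 + (norm (v t))\<^sup>2)"
  proof (rule AE_I2)
    fix t
    have "\<bar>u t \<bullet> v t\<bar> \<le> norm (u t) * norm (v t)" by (rule Cauchy_Schwarz_ineq2)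
    also have "\<dots> \<le> (norm (u t))\<^sup>2 + (norm (v t))\<^sup>2"
    proof -
      have "0 \<le> (norm (u t) - norm (v t))\<^sup>2" by simp
      hence "2 * (norm (u t) * norm (v t)) \<le> (norm (u t))\<^sup>2 + (norm (v t))\<^sup>2"
        by (simp add: power2_diff)
      moreover have "0 \<le> norm (u t) * norm (v t)" by simp
      ultimately show ?thesis by linarith
    qed
    finally show "norm (u t \<bullet> v t) \<le> norm ((norm (u t))\<^sup>2 + (norm (v t))\<^sup>2)" by simp
  qed
qed

lemma L2_lin:
  fixes u v :: "'n::finite signal"
  assumes "u \<in> L2" "v \<in> L2"
  shows "(\<lambda>t. a *\<^sub>R u t + b *\<^sub>R v t) \<in> L2"
proof -
  have m: "(\<lambda>t. a *\<^sub>R u t + b *\<^sub>R v t) \<in> borel_measurable lebesgue"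
    using assms unfolding L2_def by (intro borel_measurable_add borel_measurable_scaleR) auto
  have "integrable lebesgue (\<lambda>t. (norm (a *\<^sub>R u t + b *\<^sub>R v t))\<^sup>2)"
  proof (rule Bochner_Integration.integrable_bound)
    show "integrable lebesgue (\<lambda>t. 2 * a\<^sup>2 * (norm (u t))\<^sup>2 + 2 * b\<^sup>2 * (norm (v t))\<^sup>2)"
      using assms unfolding L2_def
      by (intro Bochner_Integration.integrable_add integrable_mult_right) auto
    show "(\<lambda>t. (norm (a *\<^sub>R u t + b *\<^sub>R v t))\<^sup>2) \<in> borel_measurable lebesgue"
      by (rule borel_measurable_power[OF measurable_compose[OF m borel_measurable_norm]])
    show "AE t in lebesgue. norm ((norm (a *\<^sub>R u t + b *\<^sub>R v t))\<^sup>2) \<le> norm (2 * a\<^sup>2 * (norm (u t))\<^sup>2 + 2 * b\<^sup>2 * (norm (v t))\<^sup>2)"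
    proof (rule AE_I2)
      fix t
      have "norm (a *\<^sub>R u t + b *\<^sub>R v t) \<le> norm (a *\<^sub>R u t) + norm (b *\<^sub>R v t)"
        by (rule norm_triangle_ineq)
      hence "norm (a *\<^sub>R u t + b *\<^sub>R v t) \<le> \<bar>a\<bar> * norm (u t) + \<bar>b\<bar> * norm (v t)"
        by simp
      hence "(norm (a *\<^sub>R u t + b *\<^sub>R v t))\<^sup>2 \<le> (\<bar>a\<bar> * norm (u t) + \<bar>b\<bar> * norm (v t))\<^sup>2"
        by (rule power_mono) simp
      also have "\<dots> \<le> 2 * (\<bar>a\<bar> * norm (u t))\<^sup>2 + 2 * (\<bar>b\<bar> * norm (v t))\<^sup>2"
      proof -
        have "0 \<le> (\<bar>a\<bar> * norm (u t) - \<bar>b\<bar> * norm (v t))\<^sup>2" by simp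
        thus ?thesis by (simp add: power2_diff power2_sum)
      qed
      also have "\<dots> = 2 * a\<^sup>2 * (norm (u t))\<^sup>2 + 2 * b\<^sup>2 * (norm (v t))\<^sup>2"
        by (simp add: power_mult_distrib)
      finally show "norm ((norm (a *\<^sub>R u t + b *\<^sub>R v t))\<^sup>2) \<le> norm (2 * a\<^sup>2 * (norm (u t))\<^sup>2 + 2 * b\<^sup>2 * (norm (v t))\<^sup>2)"
        by simp
    qed
  qed
  with m show ?thesis by (simp add: L2_def)
qed

lemma L2_inner_lin:
  fixes u1 u2 v1 v2 :: "'n::finite signal"
  assumes "u1 \<in> L2" "u2 \<in> L2" "v1 \<in> L2" "v2 \<in> L2"
  shows "L2_inner (\<lambda>t. a *\<^sub>R u1 t + b *\<^sub>R u2 t) (\<lambda>t. c *\<^sub>R v1 t + d *\<^sub>R v2 t)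
    = a*c*L2_inner u1 v1 + a*d*L2_inner u1 v2 + b*c*L2_inner u2 v1 + b*d*L2_inner u2 v2"
proof -
  have e: "(a *\<^sub>R u1 t + b *\<^sub>R u2 t) \<bullet> (c *\<^sub>R v1 t + d *\<^sub>R v2 t)
     = ((a*c) * (u1 t \<bullet> v1 t) + (a*d) * (u1 t \<bullet> v2 t)) + ((b*c) * (u2 t \<bullet> v1 t) + (b*d) * (u2 t \<bullet> v2 t))" for t
    by (simp add: inner_add_left inner_add_right algebra_simps)
  have i: "integrable lebesgue (\<lambda>t. k * (x t \<bullet> y t))" if "x \<in> L2" "y \<in> L2" for k x y
    using L2_inner_int[OF that] by simp
  show ?thesis
    unfolding L2_inner_def e
    by (subst Bochner_Integration.integral_add, (intro Bochner_Integration.integrable_add i assms)+)+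
       (simp add: integral_mult_right_zero)
qed

lemma L2_inner_self_nonneg: "0 \<le> L2_inner (u::'n::finite signal) u"
  unfolding L2_inner_def
  apply (rule integral_nonneg_AE)
  apply (rule AE_I2)
  apply simp
  done
lemma L2_norm_inner: "L2_norm (u::'n::finite signal) = sqrt (L2_inner u u)"
  by (simp add: L2_norm_def L2_inner_def power2_norm_eq_inner)

lemma L2_norm_sq: "(L2_norm (u::'n::finite signal))\<^sup>2 = L2_inner u u"
  by (simp add: L2_norm_inner L2_inner_self_nonneg)

lemma L2_norm_nonneg: "0 \<le> L2_norm (u::'n::finite signal)"
  by (simp add: L2_norm_inner L2_inner_self_nonneg)

lemma L2_inner_comm: "L2_inner (u::'n::finite signal) v = L2_inner v u"
  by (simp add: L2_inner_def inner_commute)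

lemma real_cs:
  fixes A B X :: real
  assumes "B \<ge> 0" "\<And>s. 0 \<le> A - 2 * s * X + s\<^sup>2*B"
  shows "X\<^sup>2 \<le> A*B"
proof (cases "B > 0")
  case True
  have "0 \<le> A - 2*(X/B)*X + (X/B)\<^sup>2*B" by (rule assms(2))
  also have "\<dots> = A - X\<^sup>2/B" using True by (simp add: power2_eq_square field_simps)
  finally have "X\<^sup>2/B \<le> A" by simp
  thus ?thesis using True by (simp add: divide_le_eq mult.commute)
next
  case False
  hence B: "B = 0" using assms by simp
  show ?thesis
  proof (cases "X = 0")
    case False
    define s where "s = (A+1)/(2*X)"
    have e: "2 * s * X = A+1" using False unfolding s_def by simp
    have "0 \<le> A - 2 * s * X + s\<^sup>2*B" by (rule assms(2))
    hence "0 \<le> A - (A+1)" using e B by simp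
    thus ?thesis by simp
  qed (simp add: B)
qed

lemma L2_cs:
  fixes u v :: "'n::finite signal"
  assumes "u \<in> L2" "v \<in> L2"
  shows "(L2_inner u v)\<^sup>2 \<le> L2_inner u u * L2_inner v v"
proof (rule real_cs)
  show "0 \<le> L2_inner v v" by (rule L2_inner_self_nonneg)
  fix s
  have "0 \<le> L2_inner (\<lambda>t. 1 *\<^sub>R u t + (-s) *\<^sub>R v t) (\<lambda>t. 1 *\<^sub>R u t + (-s) *\<^sub>R v t)"
    by (rule L2_inner_self_nonneg)
  also have "\<dots> = L2_inner u u - 2 * s * L2_inner u v + s\<^sup>2*L2_inner v v"
  proof -
    have "L2_inner v u = L2_inner u v" by (rule L2_inner_comm)
    thus ?thesis by (subst L2_inner_lin[OF assms assms]) (simp add: power2_eq_square algebra_simps)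
  qed
  finally show "0 \<le> L2_inner u u - 2 * s * L2_inner u v + s\<^sup>2*L2_inner v v" .
qed

lemma L2_cs_abs:
  fixes u v :: "'n::finite signal"
  assumes "u \<in> L2" "v \<in> L2"
  shows "\<bar>L2_inner u v\<bar> \<le> L2_norm u * L2_norm v"
proof -
  have "\<bar>L2_inner u v\<bar> = sqrt ((L2_inner u v)\<^sup>2)" by simp
  also have "\<dots> \<le> sqrt (L2_inner u u * L2_inner v v)" using L2_cs[OF assms] by (rule real_sqrt_le_mono)
  finally show ?thesis by (simp add: L2_norm_inner real_sqrt_mult)
qed



lemma L2p_L2: "u \<in> L2p \<Longrightarrow> u \<in> L2" by (simp add: L2p_def)

lemma trunc_L2:
  fixes u :: "'n::finite signal"
  assumes "u \<in> L2" shows "trunc T u \<in> L2"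
proof -
  have m: "trunc T u \<in> borel_measurable lebesgue"
    unfolding trunc_ind using assms by (intro meas_ind) (auto simp: L2_def)
  have "integrable lebesgue (\<lambda>t. (norm (trunc T u t))\<^sup>2)"
  proof (rule Bochner_Integration.integrable_bound)
    show "integrable lebesgue (\<lambda>t. (norm (u t))\<^sup>2)" using assms by (simp add: L2_def)
    show "(\<lambda>t. (norm (trunc T u t))\<^sup>2) \<in> borel_measurable lebesgue"
      by (rule borel_measurable_power[OF measurable_compose[OF m borel_measurable_norm]])
    show "AE t in lebesgue. norm ((norm (trunc T u t))\<^sup>2) \<le> norm ((norm (u t))\<^sup>2)"
      by (rule AE_I2) (simp add: trunc_def)
  qed
  with m show ?thesis by (simp add: L2_def)
qed

lemma trunc_norm_le:
  fixes u :: "'n::finite signal"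
  assumes "u \<in> L2" shows "L2_norm (trunc T u) \<le> L2_norm u"
proof -
  have "(LINT t|lebesgue. (norm (trunc T u t))\<^sup>2) \<le> (LINT t|lebesgue. (norm (u t))\<^sup>2)"
    using trunc_L2[OF assms, of T] assms
    by (intro integral_mono) (auto simp: L2_def trunc_def)
  thus ?thesis unfolding L2_norm_def by (rule real_sqrt_le_mono)
qed

lemma L2p_L2ep:
  fixes u :: "'n::finite signal"
  assumes "u \<in> L2p" shows "u \<in> L2ep"
  unfolding L2ep_def mem_Collect_eq
proof (intro allI impI)
  fix T :: real
  have "trunc T u \<in> L2" using assms by (intro trunc_L2) (simp add: L2p_def)
  thus "trunc T u \<in> L2p" using assms by (simp add: L2p_def trunc_def)
qed

lemma L2ep_trunc: "u \<in> L2ep \<Longrightarrow> T \<ge> 0 \<Longrightarrow> trunc T u \<in> L2"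
  unfolding L2ep_def L2p_def by auto

lemma trunc_trunc: "trunc T (trunc T u) = trunc T u"
  by (auto simp: trunc_def fun_eq_iff)

lemma L2_norm_null:
  fixes v :: "'n::finite signal"
  assumes "\<And>t. t \<noteq> 0 \<Longrightarrow> v t = 0"
  shows "L2_norm v = 0"
proof -
  have ae: "AE t in lebesgue. t \<noteq> (0::real)"
    by (simp add: AE_completion AE_lborel_singleton)
  have "(LINT t|lebesgue. (norm (v t))\<^sup>2) = 0"
    by (rule integral_eq_zero_AE) (use ae assms in \<open>auto elim!: AE_mp\<close>)
  thus ?thesis by (simp add: L2_norm_def)
qed

lemma trunc0_norm:
  fixes u :: "'n::finite signal"
  assumes "u \<in> L2ep" shows "L2_norm (trunc 0 u) = 0"
proof (rule L2_norm_null)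
  fix t :: real assume "t \<noteq> 0"
  have "trunc 0 u \<in> L2p" using assms by (simp add: L2ep_def)
  thus "trunc 0 u t = 0" using \<open>t \<noteq> 0\<close> by (cases "t < 0") (auto simp: L2p_def trunc_def)
qed

lemma L2_norm_zero_fun: "L2_norm (\<lambda>t. 0 :: real^'n::finite) = 0"
  by (simp add: L2_norm_def)

lemma gain:
  fixes P :: "'n::finite signal \<Rightarrow> 'n signal"
  assumes "stable P"
  obtains g where "g \<ge> 0" "\<And>(u::'n signal) T. u \<in> L2ep \<Longrightarrow> T \<ge> 0 \<Longrightarrow> L2_norm (trunc T (P u)) \<le> g * L2_norm (trunc T u)"
proof -
  from assms obtain B where B: "\<And>x. x \<in> {L2_norm (P u) / L2_norm u | u::'n signal. u \<in> L2p \<and> L2_norm u \<noteq> 0} \<Longrightarrow> x \<le> B"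
    unfolding stable_def bdd_above_def by blast
  have caus: "\<And>T u. T \<ge> 0 \<Longrightarrow> u \<in> L2ep \<Longrightarrow> trunc T (P u) = trunc T (P (trunc T u))"
    using assms unfolding stable_def causal_def by blast
  have PL2: "\<And>v. v \<in> L2p \<Longrightarrow> P v \<in> L2" using assms unfolding stable_def L2p_def by blast
  define g where "g = max B 0"
  have g1: "L2_norm (P v) \<le> g * L2_norm v" if "v \<in> L2p" "L2_norm v \<noteq> 0" for v
  proof -
    have "L2_norm (P v) / L2_norm v \<le> B" using B that by blast
    moreover have "L2_norm v > 0" using that L2_norm_nonneg[of v] by simp
    ultimately have "L2_norm (P v) \<le> B * L2_norm v" by (simp add: divide_le_eq)
    also have "\<dots> \<le> g * L2_norm v" using \<open>L2_norm v > 0\<close> by (intro mult_right_mono) (auto simp: g_def)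
    finally show ?thesis .
  qed
  show thesis
  proof (rule that[of g])
    show "g \<ge> 0" by (simp add: g_def)
    fix u :: "'n signal" and T :: real assume u: "u \<in> L2ep" and T: "T \<ge> 0"
    define v where "v = trunc T u"
    have vp: "v \<in> L2p" using u T by (simp add: L2ep_def v_def)
    have vL2: "v \<in> L2" using vp by (rule L2p_L2)
    have eq: "trunc T (P u) = trunc T (P v)" using caus[OF T u] by (simp add: v_def)
    show "L2_norm (trunc T (P u)) \<le> g * L2_norm (trunc T u)"
    proof (cases "L2_norm v = 0")
      case False
      have "L2_norm (trunc T (P v)) \<le> L2_norm (P v)" by (rule trunc_norm_le[OF PL2[OF vp]])
      also have "\<dots> \<le> g * L2_norm v" by (rule g1[OF vp False])
      finally show ?thesis by (simp add: eq v_def)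
    next
      case True
      define e :: "real^'n" where "e = axis undefined 1"
      define f where "f = (\<lambda>t. indicator {T<..T+1} t *\<^sub>R e)"
      have ne: "norm e = 1" by (simp add: e_def norm_axis_1)
      have fint: "(\<lambda>t. f t \<bullet> f t) = indicator {T<..T+1}"
        by (auto simp: f_def fun_eq_iff indicator_def inner_axis_axis e_def)
      have fm: "f \<in> borel_measurable lebesgue" unfolding f_def by (intro meas_ind) auto
      have fL2: "f \<in> L2"
        unfolding L2_def using fm
        by (simp add: power2_norm_eq_inner fint)
      have ff: "L2_inner f f = 1"
        unfolding L2_inner_def fint by simp
      have vv: "L2_inner v v = 0" using True L2_norm_sq[of v] by simp
      have vf: "L2_inner v f = 0" using L2_cs[OF vL2 fL2] vv by simp
      have "L2_norm (trunc T (P v)) \<le> 0"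
      proof (rule field_le_epsilon)
        fix eps :: real assume eps: "0 < eps"
        define d where "d = eps / (g + 1)"
        have d: "d > 0" using eps by (simp add: d_def g_def)
        define w where "w = (\<lambda>t. 1 *\<^sub>R v t + d *\<^sub>R f t)"
        have wL2: "w \<in> L2" unfolding w_def by (rule L2_lin[OF vL2 fL2])
        have wp: "w \<in> L2p" using wL2 vp T by (auto simp: L2p_def w_def f_def)
        have ww: "L2_inner w w = d\<^sup>2"
          unfolding w_def by (subst L2_inner_lin[OF vL2 fL2 vL2 fL2])
             (simp add: vv vf ff L2_inner_comm[of f v] power2_eq_square)
        have nw: "L2_norm w = d" using d by (simp add: L2_norm_inner ww)
        have tw: "trunc T w = v"
          by (auto simp: fun_eq_iff trunc_def w_def f_def v_def)
        have "trunc T (P v) = trunc T (P w)" using caus[OF T L2p_L2ep[OF wp]] by (simp add: tw)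
        hence "L2_norm (trunc T (P v)) \<le> L2_norm (P w)" using trunc_norm_le[OF PL2[OF wp]] by simp
        also have "\<dots> \<le> g * d" using g1[OF wp] d nw by simp
        also have "\<dots> \<le> eps" using eps by (simp add: d_def g_def field_simps)
        finally show "L2_norm (trunc T (P v)) \<le> 0 + eps" by simp
      qed
      thus ?thesis using L2_norm_nonneg[of "trunc T u"] True by (simp add: eq v_def)
    qed
  qed
qed


lemma e1: fixes A B Cn X Y Z :: real assumes "A > 0" "B > 0" "Cn > 0"
  shows "Z/(A*Cn) - (X/(A*B))*(Y/(B*Cn)) = (B\<^sup>2*Z - X*Y) / (A*B*B*Cn)"
  using assms by (simp add: field_simps power2_eq_square)
lemma e2: fixes A B Cn X Y :: real assumes "A > 0" "B > 0" "Cn > 0"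
  shows "(1 - (X/(A*B))\<^sup>2) * (1 - (Y/(B*Cn))\<^sup>2) = ((A\<^sup>2*B\<^sup>2 - X\<^sup>2) * (B\<^sup>2*Cn\<^sup>2 - Y\<^sup>2)) / (A*B*B*Cn)\<^sup>2"
proof -
  have "1 - (X/(A*B))\<^sup>2 = (A\<^sup>2*B\<^sup>2 - X\<^sup>2)/(A*B)\<^sup>2" using assms by (simp add: field_simps power2_eq_square)
  moreover have "1 - (Y/(B*Cn))\<^sup>2 = (B\<^sup>2*Cn\<^sup>2 - Y\<^sup>2)/(B*Cn)\<^sup>2" using assms by (simp add: field_simps power2_eq_square)
  moreover have "(A*B)\<^sup>2 * (B*Cn)\<^sup>2 = (A*B*B*Cn)\<^sup>2" by (simp add: power_mult_distrib)
  ultimately show ?thesis by (simp add: times_divide_times_eq)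
qed

lemma key_real:
  fixes A B Cn X Y Z mP mC :: real
  assumes A: "A > 0" and B: "B > 0" and Cn: "Cn > 0"
    and cx: "\<bar>X\<bar> \<le> A*B" and cy: "\<bar>Y\<bar> \<le> B*Cn"
    and pq: "(B\<^sup>2*B\<^sup>2*Z - B\<^sup>2*X*Y)\<^sup>2 \<le> (B\<^sup>2*(A\<^sup>2*B\<^sup>2 - X\<^sup>2)) * (B\<^sup>2*(B\<^sup>2*Cn\<^sup>2 - Y\<^sup>2))"
    and mP: "mP \<le> X/(A*B)" "-1 \<le> mP" and mC: "mC \<le> Y/(B*Cn)" "-1 \<le> mC"
    and lt: "arccos mP + arccos mC < pi"
  shows "cos (arccos mP + arccos mC) * (A*Cn) \<le> Z"
proof -
  define x where "x = X/(A*B)"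
  define y where "y = Y/(B*Cn)"
  define z where "z = Z/(A*Cn)"
  have AB: "A*B > 0" and BC: "B*Cn > 0" and AC: "A*Cn > 0" using A B Cn by auto
  have x1: "\<bar>x\<bar> \<le> 1" using cx AB by (simp add: x_def abs_div divide_le_eq)
  have y1: "\<bar>y\<bar> \<le> 1" using cy BC by (simp add: y_def abs_div divide_le_eq)
  have "(B\<^sup>2)\<^sup>2 * (B\<^sup>2*Z - X*Y)\<^sup>2 \<le> (B\<^sup>2)\<^sup>2 * ((A\<^sup>2*B\<^sup>2 - X\<^sup>2) * (B\<^sup>2*Cn\<^sup>2 - Y\<^sup>2))"
  proof -
    have h0: "B\<^sup>2*B\<^sup>2*Z - B\<^sup>2*X*Y = B\<^sup>2 * (B\<^sup>2*Z - X*Y)" by (simp add: right_diff_distrib mult.assoc)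
    have h1: "(B\<^sup>2*B\<^sup>2*Z - B\<^sup>2*X*Y)\<^sup>2 = (B\<^sup>2)\<^sup>2 * (B\<^sup>2*Z - X*Y)\<^sup>2"
      unfolding h0 by (rule power_mult_distrib)
    have h2: "(B\<^sup>2*(A\<^sup>2*B\<^sup>2 - X\<^sup>2)) * (B\<^sup>2*(B\<^sup>2*Cn\<^sup>2 - Y\<^sup>2)) = (B\<^sup>2)\<^sup>2 * ((A\<^sup>2*B\<^sup>2 - X\<^sup>2) * (B\<^sup>2*Cn\<^sup>2 - Y\<^sup>2))"
      by (simp add: power2_eq_square mult.assoc mult.left_commute)
    show ?thesis using pq unfolding h1 h2 .
  qed
  hence pq': "(B\<^sup>2*Z - X*Y)\<^sup>2 \<le> (A\<^sup>2*B\<^sup>2 - X\<^sup>2) * (B\<^sup>2*Cn\<^sup>2 - Y\<^sup>2)"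
    using B by (simp add: mult_le_cancel_left_pos)
  define N where "N = A*B*B*Cn"
  have N: "N > 0" using A B Cn by (simp add: N_def)
  have e1: "z - x*y = (B\<^sup>2*Z - X*Y) / N"
    unfolding x_def y_def z_def N_def by (rule e1[OF A B Cn])
  have e2: "(1 - x\<^sup>2) * (1 - y\<^sup>2) = ((A\<^sup>2*B\<^sup>2 - X\<^sup>2) * (B\<^sup>2*Cn\<^sup>2 - Y\<^sup>2)) / N\<^sup>2"
    unfolding x_def y_def N_def by (rule e2[OF A B Cn])
  have "(z - x*y)\<^sup>2 \<le> (1 - x\<^sup>2) * (1 - y\<^sup>2)"
    unfolding e1 e2 power_divide using pq' N by (simp add: divide_right_mono)
  hence "sqrt ((z - x*y)\<^sup>2) \<le> sqrt ((1 - x\<^sup>2) * (1 - y\<^sup>2))" by (rule real_sqrt_le_mono)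
  hence zb: "x*y - sqrt (1 - x\<^sup>2) * sqrt (1 - y\<^sup>2) \<le> z" by (simp add: real_sqrt_mult)
  define al where "al = arccos x"
  define ga where "ga = arccos y"
  have xr: "-1 \<le> x" "x \<le> 1" and yr: "-1 \<le> y" "y \<le> 1" using x1 y1 by auto
  have "cos (al + ga) = x*y - sqrt (1 - x\<^sup>2) * sqrt (1 - y\<^sup>2)"
    using xr yr by (simp add: al_def ga_def cos_add sin_arccos cos_arccos)
  have al0: "0 \<le> al" using xr by (simp add: al_def arccos_lbound)
  have ga0: "0 \<le> ga" using yr by (simp add: ga_def arccos_lbound)
  have alP: "al \<le> arccos mP" unfolding al_def using mP xr by (intro arccos_le_arccos) (auto simp: x_def)
  have gaC: "ga \<le> arccos mC" unfolding ga_def using mC yr by (intro arccos_le_arccos) (auto simp: y_def)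
  have "cos (arccos mP + arccos mC) \<le> cos (al + ga)"
    using al0 ga0 alP gaC lt by (intro cos_monotone_0_pi_le) auto
  also have "\<dots> \<le> z" using zb \<open>cos (al + ga) = _\<close> by simp
  finally have "cos (arccos mP + arccos mC) * (A*Cn) \<le> z * (A*Cn)"
    using AC by (simp add: mult_right_mono)
  also have "z * (A*Cn) = Z" using A Cn by (simp add: z_def)
  finally show ?thesis .
qed

lemma final_real:
  fixes A Cn Z d k :: real
  assumes "0 \<le> A" "0 \<le> Cn" "-1 \<le> d" "d * (A*Cn) \<le> Z" "k = min 1 (1 + d)"
  shows "k * A\<^sup>2 \<le> A\<^sup>2 + 2*Z + Cn\<^sup>2"
proof (cases "d \<ge> 0")
  case True
  have "0 \<le> d*(A*Cn)" using True assms(1,2) by simp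
  hence "0 \<le> Z" using assms(4) by linarith
  moreover have "k \<le> 1" using assms(5) by simp
  hence "k * A\<^sup>2 \<le> 1 * A\<^sup>2" by (intro mult_right_mono) auto
  moreover have "0 \<le> Cn\<^sup>2" by simp
  ultimately show ?thesis by linarith
next
  case False
  have s: "2*(A*Cn) \<le> A\<^sup>2 + Cn\<^sup>2"
  proof -
    have "0 \<le> (A - Cn)\<^sup>2" by simp
    thus ?thesis by (simp add: power2_diff)
  qed
  have "d * (A\<^sup>2 + Cn\<^sup>2) \<le> d * (2*(A*Cn))" using False s by (simp add: mult_left_mono_neg)
  hence "(1 + d) * A\<^sup>2 + (1+d) * Cn\<^sup>2 \<le> A\<^sup>2 + 2*Z + Cn\<^sup>2" using assms(4) by (simp add: algebra_simps)
  moreover have "0 \<le> (1+d) * Cn\<^sup>2" using assms(3) by simp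
  moreover have "k \<le> 1 + d" using assms(5) by simp
  hence "k * A\<^sup>2 \<le> (1 + d) * A\<^sup>2" by (simp add: mult_right_mono)
  ultimately show ?thesis by linarith
qed


lemma angle_facts:
  fixes P :: "'n::finite signal \<Rightarrow> 'n signal" and u :: "'n signal"
  assumes sys: "is_system P" and u: "u \<in> L2ep" and T: "T > 0"
    and na: "L2_norm (trunc T u) \<noteq> 0" and nb: "L2_norm (trunc T (P u)) \<noteq> 0"
  shows "Inf {L2_inner (trunc T u) (trunc T (P u)) / (L2_norm (trunc T u) * L2_norm (trunc T (P u))) | u T.
        u \<in> L2ep \<and> T > 0 \<and> L2_norm (trunc T u) \<noteq> 0 \<and> L2_norm (trunc T (P u)) \<noteq> 0}
      \<le> L2_inner (trunc T u) (trunc T (P u)) / (L2_norm (trunc T u) * L2_norm (trunc T (P u)))"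
    and "-1 \<le> Inf {L2_inner (trunc T u) (trunc T (P u)) / (L2_norm (trunc T u) * L2_norm (trunc T (P u))) | u T.
        u \<in> L2ep \<and> T > 0 \<and> L2_norm (trunc T u) \<noteq> 0 \<and> L2_norm (trunc T (P u)) \<noteq> 0}"
proof -
  let ?S = "{L2_inner (trunc T u) (trunc T (P u)) / (L2_norm (trunc T u) * L2_norm (trunc T (P u))) | u T.
        u \<in> L2ep \<and> T > 0 \<and> L2_norm (trunc T u) \<noteq> 0 \<and> L2_norm (trunc T (P u)) \<noteq> 0}"
  have lb: "-1 \<le> s" if "s \<in> ?S" for s
  proof -
    from that obtain v :: "'n signal" and T' where s: "s = L2_inner (trunc T' v) (trunc T' (P v)) / (L2_norm (trunc T' v) * L2_norm (trunc T' (P v)))"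
      and v: "v \<in> L2ep" "T' > 0" "L2_norm (trunc T' v) \<noteq> 0" "L2_norm (trunc T' (P v)) \<noteq> 0" by blast
    have Pv: "P v \<in> L2ep" using sys v(1) by (simp add: is_system_def)
    have c: "\<bar>L2_inner (trunc T' v) (trunc T' (P v))\<bar> \<le> L2_norm (trunc T' v) * L2_norm (trunc T' (P v))"
      using v(2) by (intro L2_cs_abs L2ep_trunc v(1) Pv) auto
    have pos: "L2_norm (trunc T' v) * L2_norm (trunc T' (P v)) > 0"
      using v(3,4) L2_norm_nonneg[of "trunc T' v"] L2_norm_nonneg[of "trunc T' (P v)"] by simp
    show ?thesis unfolding s using c pos by (simp add: le_divide_eq abs_le_iff)
  qed
  have mem: "L2_inner (trunc T u) (trunc T (P u)) / (L2_norm (trunc T u) * L2_norm (trunc T (P u))) \<in> ?S"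
    using u T na nb by blast
  have bdd: "bdd_below ?S" using lb by (intro bdd_belowI) 
  show "Inf ?S \<le> L2_inner (trunc T u) (trunc T (P u)) / (L2_norm (trunc T u) * L2_norm (trunc T (P u)))"
    by (rule cInf_lower[OF mem bdd])
  show "-1 \<le> Inf ?S"
    using mem lb by (intro cInf_greatest) auto
qed

theorem corollary5:
  fixes P C :: "'n::finite signal \<Rightarrow> 'n signal"
  assumes "is_system P" and "is_system C"
    and "stable P" and "stable C"
    and "well_posed P C"
    and "singular_angle_e P + singular_angle_e C < pi"
  shows "stable_e2_zero P C"
proof -
  obtain gP where gP0: "gP \<ge> 0" and gP: "\<And>(u::'n signal) T. u \<in> L2ep \<Longrightarrow> T \<ge> 0 \<Longrightarrow> L2_norm (trunc T (P u)) \<le> gP * L2_norm (trunc T u)"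
    using gain[OF assms(3)] by blast
  obtain gC where gC0: "gC \<ge> 0" and gC: "\<And>(u::'n signal) T. u \<in> L2ep \<Longrightarrow> T \<ge> 0 \<Longrightarrow> L2_norm (trunc T (C u)) \<le> gC * L2_norm (trunc T u)"
    using gain[OF assms(4)] by blast
  define tP where "tP = singular_angle_e P"
  define tC where "tC = singular_angle_e C"
  have lt: "tP + tC < pi" using assms(6) by (simp add: tP_def tC_def)
  define d where "d = cos (tP + tC)"
  define k where "k = (if 0 \<le> tP + tC then min 1 (1 + d) else 1)"
  have k0: "0 < k"
  proof (cases "0 \<le> tP + tC")
    case True
    have "cos pi < cos (tP + tC)" using True lt by (intro cos_monotone_0_pi) auto
    thus ?thesis using True by (simp add: k_def d_def)
  qed (simp add: k_def)
  have k1: "k \<le> 1" by (simp add: k_def)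
  define c where "c = sqrt (1 + gP\<^sup>2) / sqrt k"
  have c0: "c > 0" using k0 by (simp add: c_def add_pos_nonneg)
  show ?thesis
    unfolding stable_e2_zero_def
  proof (intro exI[of _ c] conjI allI impI)
    show "c > 0" by (rule c0)
    fix T :: real and e1 u1 u2 :: "'n signal"
    assume T: "T \<ge> 0"
      and H: "e1 \<in> L2ep \<and> u1 \<in> L2ep \<and> u2 \<in> L2ep \<and> e1 = (\<lambda>t. u1 t + C u2 t) \<and> (\<lambda>t. 0) = (\<lambda>t. u2 t - P u1 t)"
    have u1: "u1 \<in> L2ep" and u2: "u2 \<in> L2ep" and e1: "e1 = (\<lambda>t. u1 t + C u2 t)" using H by auto
    have u2P: "u2 = P u1"
    proof
      fix t
      have "0 = u2 t - P u1 t" using H by (metis (mono_tags))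
      thus "u2 t = P u1 t" by simp
    qed
    define a where "a = trunc T u1"
    define b where "b = trunc T u2"
    define cc where "cc = trunc T (C u2)"
    have Cu2: "C u2 \<in> L2ep" using assms(2) u2 by (simp add: is_system_def)
    have aL2: "a \<in> L2" unfolding a_def by (rule L2ep_trunc[OF u1 T])
    have bL2: "b \<in> L2" unfolding b_def by (rule L2ep_trunc[OF u2 T])
    have cL2: "cc \<in> L2" unfolding cc_def by (rule L2ep_trunc[OF Cu2 T])
    have he: "trunc T e1 = (\<lambda>t. 1 *\<^sub>R a t + 1 *\<^sub>R cc t)"
      by (simp add: e1 fun_eq_iff trunc_def a_def cc_def)
    have nb: "L2_norm b \<le> gP * L2_norm a" unfolding a_def b_def u2P using gP[OF u1 T] .
    have nc: "L2_norm cc \<le> gC * L2_norm b" unfolding cc_def b_def using gC[OF u2 T] .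
    define A where "A = L2_norm a"
    define Bn where "Bn = L2_norm b"
    define Cn where "Cn = L2_norm cc"
    define E where "E = L2_norm (trunc T e1)"
    define X where "X = L2_inner a b"
    define Y where "Y = L2_inner b cc"
    define Z where "Z = L2_inner a cc"
    have A0: "A \<ge> 0" "Bn \<ge> 0" "Cn \<ge> 0" "E \<ge> 0" by (simp_all add: A_def Bn_def Cn_def E_def L2_norm_nonneg)
    have aa: "L2_inner a a = A\<^sup>2" by (simp add: A_def L2_norm_sq)
    have bb: "L2_inner b b = Bn\<^sup>2" by (simp add: Bn_def L2_norm_sq)
    have ccc: "L2_inner cc cc = Cn\<^sup>2" by (simp add: Cn_def L2_norm_sq)
    have EE: "E\<^sup>2 = A\<^sup>2 + 2*Z + Cn\<^sup>2"
    proof -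
      have "E\<^sup>2 = L2_inner (\<lambda>t. 1 *\<^sub>R a t + 1 *\<^sub>R cc t) (\<lambda>t. 1 *\<^sub>R a t + 1 *\<^sub>R cc t)"
        unfolding E_def he by (rule L2_norm_sq)
      also have "\<dots> = A\<^sup>2 + 2*Z + Cn\<^sup>2"
        by (subst L2_inner_lin[OF aL2 cL2 aL2 cL2]) (simp add: aa ccc Z_def L2_inner_comm[of cc a])
      finally show ?thesis .
    qed
    have key: "k * A\<^sup>2 \<le> E\<^sup>2"
    proof (cases "A = 0")
      case True
      thus ?thesis by simp
    next
      case Anz: False
      show ?thesis
      proof (cases "Cn = 0")
        case True
        have "Z\<^sup>2 \<le> A\<^sup>2 * Cn\<^sup>2" using L2_cs[OF aL2 cL2] by (simp add: Z_def aa ccc)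
        hence "Z = 0" using True by simp
        hence "E\<^sup>2 = A\<^sup>2" using EE True by simp
        moreover have "k * A\<^sup>2 \<le> 1 * A\<^sup>2" using k1 by (intro mult_right_mono) auto
        ultimately show ?thesis by simp
      next
        case Cnz: False
        have Bnz: "Bn \<noteq> 0"
        proof
          assume "Bn = 0"
          hence "Cn \<le> 0" using nc by (simp add: Cn_def Bn_def)
          thus False using Cnz A0 by simp
        qed
        have Tpos: "T > 0"
        proof (rule ccontr)
          assume "\<not> T > 0"
          hence "T = 0" using T by simp
          hence "A = 0" using trunc0_norm[OF u1] by (simp add: A_def a_def)
          thus False using Anz by simp
        qed
        have Apos: "A > 0" and Bpos: "Bn > 0" and Cpos: "Cn > 0" using A0 Anz Bnz Cnz by auto
        note fP = angle_facts[OF assms(1) u1 Tpos]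
        note fC = angle_facts[OF assms(2) u2 Tpos]
        have bP: "trunc T (P u1) = b" by (simp add: b_def u2P)
        have mP: "Inf {L2_inner (trunc T u) (trunc T (P u)) / (L2_norm (trunc T u) * L2_norm (trunc T (P u))) | u T.
            u \<in> L2ep \<and> T > 0 \<and> L2_norm (trunc T u) \<noteq> 0 \<and> L2_norm (trunc T (P u)) \<noteq> 0} \<le> X / (A * Bn)"
             "-1 \<le> Inf {L2_inner (trunc T u) (trunc T (P u)) / (L2_norm (trunc T u) * L2_norm (trunc T (P u))) | u T.
            u \<in> L2ep \<and> T > 0 \<and> L2_norm (trunc T u) \<noteq> 0 \<and> L2_norm (trunc T (P u)) \<noteq> 0}"
          using fP[unfolded bP a_def[symmetric]] Anz Bnz by (simp_all add: A_def Bn_def X_def)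
        have mC: "Inf {L2_inner (trunc T u) (trunc T (C u)) / (L2_norm (trunc T u) * L2_norm (trunc T (C u))) | u T.
            u \<in> L2ep \<and> T > 0 \<and> L2_norm (trunc T u) \<noteq> 0 \<and> L2_norm (trunc T (C u)) \<noteq> 0} \<le> Y / (Bn * Cn)"
             "-1 \<le> Inf {L2_inner (trunc T u) (trunc T (C u)) / (L2_norm (trunc T u) * L2_norm (trunc T (C u))) | u T.
            u \<in> L2ep \<and> T > 0 \<and> L2_norm (trunc T u) \<noteq> 0 \<and> L2_norm (trunc T (C u)) \<noteq> 0}"
          using fC[unfolded b_def[symmetric] cc_def[symmetric]] Bnz Cnz by (simp_all add: Bn_def Cn_def Y_def)
        have cx: "\<bar>X\<bar> \<le> A * Bn" using L2_cs_abs[OF aL2 bL2] by (simp add: X_def A_def Bn_def)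
        have cy: "\<bar>Y\<bar> \<le> Bn * Cn" using L2_cs_abs[OF bL2 cL2] by (simp add: Y_def Cn_def Bn_def)
        define p where "p = (\<lambda>t. (Bn\<^sup>2) *\<^sub>R a t + (- X) *\<^sub>R b t)"
        define q where "q = (\<lambda>t. (Bn\<^sup>2) *\<^sub>R cc t + (- Y) *\<^sub>R b t)"
        have pL2: "p \<in> L2" unfolding p_def by (rule L2_lin[OF aL2 bL2])
        have qL2: "q \<in> L2" unfolding q_def by (rule L2_lin[OF cL2 bL2])
        have ba: "L2_inner b a = X" by (simp add: X_def L2_inner_comm)
        have cb: "L2_inner cc b = Y" by (simp add: Y_def L2_inner_comm)
        have pq: "L2_inner p q = Bn\<^sup>2*Bn\<^sup>2*Z - Bn\<^sup>2*X*Y"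
          unfolding p_def q_def
          by (subst L2_inner_lin[OF aL2 bL2 cL2 bL2]) (simp add: Z_def[symmetric] X_def[symmetric] Y_def[symmetric] bb ba power2_eq_square algebra_simps)
        have pp: "L2_inner p p = Bn\<^sup>2*(A\<^sup>2*Bn\<^sup>2 - X\<^sup>2)"
          unfolding p_def
          by (subst L2_inner_lin[OF aL2 bL2 aL2 bL2]) (simp add: aa X_def[symmetric] bb ba power2_eq_square algebra_simps)
        have qq: "L2_inner q q = Bn\<^sup>2*(Bn\<^sup>2*Cn\<^sup>2 - Y\<^sup>2)"
          unfolding q_def
          by (subst L2_inner_lin[OF cL2 bL2 cL2 bL2]) (simp add: ccc Y_def[symmetric] bb cb power2_eq_square algebra_simps)
        have pqi: "(Bn\<^sup>2*Bn\<^sup>2*Z - Bn\<^sup>2*X*Y)\<^sup>2 \<le> (Bn\<^sup>2*(A\<^sup>2*Bn\<^sup>2 - X\<^sup>2)) * (Bn\<^sup>2*(Bn\<^sup>2*Cn\<^sup>2 - Y\<^sup>2))"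
          using L2_cs[OF pL2 qL2] unfolding pq pp qq .
        have ltt: "arccos (Inf {L2_inner (trunc T u) (trunc T (P u)) / (L2_norm (trunc T u) * L2_norm (trunc T (P u))) | u T.
            u \<in> L2ep \<and> T > 0 \<and> L2_norm (trunc T u) \<noteq> 0 \<and> L2_norm (trunc T (P u)) \<noteq> 0})
          + arccos (Inf {L2_inner (trunc T u) (trunc T (C u)) / (L2_norm (trunc T u) * L2_norm (trunc T (C u))) | u T.
            u \<in> L2ep \<and> T > 0 \<and> L2_norm (trunc T u) \<noteq> 0 \<and> L2_norm (trunc T (C u)) \<noteq> 0}) < pi"
          using lt unfolding tP_def tC_def singular_angle_e_def .
        have kr: "cos (tP + tC) * (A * Cn) \<le> Z"
          using key_real[OF Apos Bpos Cpos cx cy pqi mP(1) mP(2) mC(1) mC(2) ltt]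
          unfolding tP_def tC_def singular_angle_e_def .
        have x1: "X / (A * Bn) \<le> 1" using cx Apos Bpos by (simp add: divide_le_eq abs_le_iff)
        have y1: "Y / (Bn * Cn) \<le> 1" using cy Cpos Bpos by (simp add: divide_le_eq abs_le_iff)
        have nn: "0 \<le> tP + tC"
          unfolding tP_def tC_def singular_angle_e_def
          using mP mC x1 y1
          by (intro add_nonneg_nonneg arccos_lbound) linarith+
        have "k * A\<^sup>2 \<le> A\<^sup>2 + 2*Z + Cn\<^sup>2"
          by (rule final_real[OF A0(1) A0(3) _ kr[folded d_def]]) (simp_all add: k_def nn d_def)
        thus ?thesis using EE by simp
      qed
    qed
    have AE: "sqrt k * A \<le> E"
    proof -
      have "sqrt (k * A\<^sup>2) \<le> sqrt (E\<^sup>2)" using key by (rule real_sqrt_le_mono)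
      thus ?thesis using A0 k0 by (simp add: real_sqrt_mult)
    qed
    have "L2_norm2 (trunc2 T (u1, u2)) = sqrt (A\<^sup>2 + Bn\<^sup>2)"
      by (simp add: L2_norm2_def trunc2_def A_def Bn_def a_def b_def)
    also have "\<dots> \<le> sqrt ((1 + gP\<^sup>2) * A\<^sup>2)"
    proof (rule real_sqrt_le_mono)
      have "Bn\<^sup>2 \<le> (gP * A)\<^sup>2" using nb A0 by (intro power_mono) (simp_all add: A_def Bn_def)
      thus "A\<^sup>2 + Bn\<^sup>2 \<le> (1 + gP\<^sup>2) * A\<^sup>2" by (simp add: power_mult_distrib algebra_simps)
    qed
    also have "\<dots> = sqrt (1 + gP\<^sup>2) * A" using A0 by (simp add: real_sqrt_mult)
    also have "\<dots> \<le> c * E"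
    proof -
      have "A \<le> E / sqrt k" using AE k0 by (simp add: le_divide_eq mult.commute)
      hence "sqrt (1 + gP\<^sup>2) * A \<le> sqrt (1 + gP\<^sup>2) * (E / sqrt k)" by (intro mult_left_mono) auto
      thus ?thesis by (simp add: c_def)
    qed
    also have "E = L2_norm2 (trunc2 T (e1, \<lambda>t. 0))"
    proof -
      have "trunc T (\<lambda>t. 0 :: real^'n) = (\<lambda>t. 0)" by (simp add: trunc_def fun_eq_iff)
      thus ?thesis using A0 by (simp add: L2_norm2_def trunc2_def E_def L2_norm_zero_fun)
    qed
    finally show "L2_norm2 (trunc2 T (u1, u2)) \<le> c * L2_norm2 (trunc2 T (e1, \<lambda>t. 0))" .
  qed
qed


end
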